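(* Let $R$ be a commutative ring and $\mathfrak{a}\subseteq R$ an ideal. If $\Gamma_\mathfrak{a}$ commutes with inductive limits (all small colimits), then $\Gamma_\mathfrak{a}$ is a radical and $R=\Gamma_\mathfrak{a}(R)+\mathfrak{a}$.
   Context: $\Gamma_\mathfrak{a}(M)=\{x\in M\mid \exists n\in\mathbb{N}:\mathfrak{a}^n\subseteq(0:_Rx)\}$. A radical is a subfunctor $F$ of the identity functor on $R$-modules with $F(M/F(M))=0$ for every $R$-module $M$. *)

theory Defs
  imports "HOL-Algebra.Module" "HOL-Algebra.Ideal_Product" "HOL-Algebra.AbelCoset"
begin

definition lin_map :: "('r, 'z) ring_scheme \<Rightarrow> ('r, 'm) module \<Rightarrow> ('r, 'n) module \<Rightarrow> ('m \<Rightarrow> 'n) \<Rightarrow> bool" where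
  "lin_map R M N f \<longleftrightarrow>
     (\<forall>x\<in>carrier M. f x \<in> carrier N) \<and>
     (\<forall>x\<in>carrier M. \<forall>y\<in>carrier M. f (x \<oplus>\<^bsub>M\<^esub> y) = f x \<oplus>\<^bsub>N\<^esub> f y) \<and>
     (\<forall>r\<in>carrier R. \<forall>x\<in>carrier M. f (r \<odot>\<^bsub>M\<^esub> x) = r \<odot>\<^bsub>N\<^esub> f x)"

primrec ideal_pow :: "('r, 'z) ring_scheme \<Rightarrow> 'r set \<Rightarrow> nat \<Rightarrow> 'r set" where
  "ideal_pow R I 0 = carrier R"
| "ideal_pow R I (Suc n) = ideal_prod R I (ideal_pow R I n)"

definition annihilator :: "('r, 'z) ring_scheme \<Rightarrow> ('r, 'm) module \<Rightarrow> 'm \<Rightarrow> 'r set" where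
  "annihilator R M x = {r \<in> carrier R. r \<odot>\<^bsub>M\<^esub> x = \<zero>\<^bsub>M\<^esub>}"

definition Gamma :: "('r, 'z) ring_scheme \<Rightarrow> 'r set \<Rightarrow> ('r, 'm) module \<Rightarrow> 'm set" where
  "Gamma R a M = {x \<in> carrier M. \<exists>n::nat. ideal_pow R a n \<subseteq> annihilator R M x}"

definition Gamma_mod :: "('r, 'z) ring_scheme \<Rightarrow> 'r set \<Rightarrow> ('r, 'm) module \<Rightarrow> ('r, 'm) module" where
  "Gamma_mod R a M = M\<lparr>carrier := Gamma R a M\<rparr>"

definition ring_module :: "('r, 'z) ring_scheme \<Rightarrow> ('r, 'r) module" where
  "ring_module R = \<lparr>carrier = carrier R, monoid.mult = monoid.mult R, one = one R,
                    zero = zero R, add = add R, smult = monoid.mult R\<rparr>"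

text \<open>The quotient module M/N (N a submodule of M); elements are the cosets N + x.
  The ring fields mult/one of the record are irrelevant for modules.\<close>
definition quot_module :: "('r, 'm) module \<Rightarrow> 'm set \<Rightarrow> ('r, 'm set) module" where
  "quot_module M N = \<lparr>carrier = a_rcosets\<^bsub>M\<^esub> N, monoid.mult = undefined, one = undefined,
                      zero = N, add = set_add M,
                      smult = (\<lambda>r X. \<Union>x\<in>X. N +>\<^bsub>M\<^esub> (r \<odot>\<^bsub>M\<^esub> x))\<rparr>"

text \<open>A diagram: vertex set V, edge set E with source/target maps, an R-module D v
  for each vertex and an R-linear map f e : D (src e) \<rightarrow> D (tgt e) for each edge.\<close>
definition cocone ::
  "('r, 'z) ring_scheme \<Rightarrow> 'i set \<Rightarrow> 'j set \<Rightarrow> ('j \<Rightarrow> 'i) \<Rightarrow> ('j \<Rightarrow> 'i) \<Rightarrow>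
   ('i \<Rightarrow> ('r, 'm) module) \<Rightarrow> ('j \<Rightarrow> 'm \<Rightarrow> 'm) \<Rightarrow> ('r, 'l) module \<Rightarrow> ('i \<Rightarrow> 'm \<Rightarrow> 'l) \<Rightarrow> bool" where
  "cocone R V E src tgt D f L \<iota> \<longleftrightarrow>
     module R L \<and> (\<forall>v\<in>V. lin_map R (D v) L (\<iota> v)) \<and>
     (\<forall>e\<in>E. \<forall>x\<in>carrier (D (src e)). \<iota> (tgt e) (f e x) = \<iota> (src e) x)"

definition diagram ::
  "('r, 'z) ring_scheme \<Rightarrow> 'i set \<Rightarrow> 'j set \<Rightarrow> ('j \<Rightarrow> 'i) \<Rightarrow> ('j \<Rightarrow> 'i) \<Rightarrow>
   ('i \<Rightarrow> ('r, 'm) module) \<Rightarrow> ('j \<Rightarrow> 'm \<Rightarrow> 'm) \<Rightarrow> bool" where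
  "diagram R V E src tgt D f \<longleftrightarrow>
     (\<forall>v\<in>V. module R (D v)) \<and>
     (\<forall>e\<in>E. src e \<in> V \<and> tgt e \<in> V \<and> lin_map R (D (src e)) (D (tgt e)) (f e))"

text \<open>(L, iota) is a colimit: every cocone (N, kappa) factors uniquely through it.
  Test cocones range over R-modules whose elements have the same HOL type as L.\<close>
definition is_colimit ::
  "('r, 'z) ring_scheme \<Rightarrow> 'i set \<Rightarrow> 'j set \<Rightarrow> ('j \<Rightarrow> 'i) \<Rightarrow> ('j \<Rightarrow> 'i) \<Rightarrow>
   ('i \<Rightarrow> ('r, 'm) module) \<Rightarrow> ('j \<Rightarrow> 'm \<Rightarrow> 'm) \<Rightarrow> ('r, 'l) module \<Rightarrow> ('i \<Rightarrow> 'm \<Rightarrow> 'l) \<Rightarrow> bool" where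
  "is_colimit R V E src tgt D f L \<iota> \<longleftrightarrow>
     diagram R V E src tgt D f \<and> cocone R V E src tgt D f L \<iota> \<and>
     (\<forall>(N :: ('r, 'l) module) \<kappa>. cocone R V E src tgt D f N \<kappa> \<longrightarrow>
        (\<exists>u. lin_map R L N u \<and> (\<forall>v\<in>V. \<forall>x\<in>carrier (D v). u (\<iota> v x) = \<kappa> v x) \<and>
             (\<forall>u'. lin_map R L N u' \<and> (\<forall>v\<in>V. \<forall>x\<in>carrier (D v). u' (\<iota> v x) = \<kappa> v x)
                   \<longrightarrow> (\<forall>y\<in>carrier L. u' y = u y))))"

text \<open>HOL cannot quantify over types inside a formula, so the types of the diagram objects
  ('m) and of the colimit object ('l) are explicit parameters; index sets are sets of
  natural numbers.\<close>
definition Gamma_commutes_colimits ::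
  "('r, 'z) ring_scheme \<Rightarrow> 'r set \<Rightarrow> 'm itself \<Rightarrow> 'l itself \<Rightarrow> bool" where
  "Gamma_commutes_colimits R a (_ :: 'm itself) (_ :: 'l itself) \<longleftrightarrow>
     (\<forall>(V :: nat set) (E :: nat set) src tgt (D :: nat \<Rightarrow> ('r, 'm) module) f
        (L :: ('r, 'l) module) \<iota>.
        is_colimit R V E src tgt D f L \<iota> \<longrightarrow>
        is_colimit R V E src tgt (\<lambda>v. Gamma_mod R a (D v)) f (Gamma_mod R a L) \<iota>)"

end

theory Submission
  imports Defs
begin


lemma ideal_pow_ideal:
  assumes "cring R" "ideal a R"
  shows "ideal (ideal_pow R a n) R"
proof (induction n)
  case 0 then show ?case using assms by (simp add: cring.axioms(1) ring.oneideal)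
next
  case (Suc n) then show ?case using assms by (simp add: cring.axioms(1) ring.ideal_prod_is_ideal)
qed

lemma ideal_pow_anti:
  assumes "cring R" "ideal a R" "n \<le> m"
  shows "ideal_pow R a m \<subseteq> ideal_pow R a n"
  using assms(3)
proof (induction m)
  case 0 then show ?case by simp
next
  case (Suc m)
  have "ideal_pow R a (Suc m) \<subseteq> ideal_pow R a m"
    using ring.ideal_prod_inter[OF cring.axioms(1)[OF assms(1)] assms(2) ideal_pow_ideal[OF assms(1,2), of m]]
    by simp
  then show ?case using Suc by (cases "n = Suc m") auto
qed

lemma ideal_pow_one:
  assumes "cring R" "ideal a R"
  shows "ideal_pow R a 1 \<subseteq> a"
  using ring.ideal_prod_inter[OF cring.axioms(1)[OF assms(1)] assms(2) ring.oneideal[OF cring.axioms(1)[OF assms(1)]]]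
  by simp

lemma annI:
  assumes "\<And>r. r \<in> ideal_pow R a n \<Longrightarrow> r \<in> carrier R \<and> r \<odot>\<^bsub>M\<^esub> x = \<zero>\<^bsub>M\<^esub>"
  shows "ideal_pow R a n \<subseteq> annihilator R M x"
  using assms unfolding annihilator_def by blast

lemma annD:
  assumes "ideal_pow R a n \<subseteq> annihilator R M x" "r \<in> ideal_pow R a n"
  shows "r \<in> carrier R" "r \<odot>\<^bsub>M\<^esub> x = \<zero>\<^bsub>M\<^esub>"
  using assms unfolding annihilator_def by blast+

lemma GammaI: "x \<in> carrier M \<Longrightarrow> ideal_pow R a n \<subseteq> annihilator R M x \<Longrightarrow> x \<in> Gamma R a M"
  unfolding Gamma_def by blast

lemma GammaE: "x \<in> Gamma R a M \<Longrightarrow> (\<And>n. x \<in> carrier M \<Longrightarrow> ideal_pow R a n \<subseteq> annihilator R M x \<Longrightarrow> P) \<Longrightarrow> P"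
  unfolding Gamma_def by blast

lemma Gamma_submodule:
  assumes M: "module R M" and a: "ideal a R"
  shows "submodule (Gamma R a M) R M"
proof -
  interpret module R M by fact
  have cr: "cring R" by (simp add: is_cring)
  have ipc: "ideal_pow R a n \<subseteq> carrier R" for n
    using ideal.Icarr[OF ideal_pow_ideal[OF cr a, of n]] by auto
  show ?thesis
  proof (rule submoduleI)
    show "Gamma R a M \<subseteq> carrier M" unfolding Gamma_def by blast
    have "ideal_pow R a 0 \<subseteq> annihilator R M \<zero>\<^bsub>M\<^esub>"
      by (rule annI) simp
    then show "\<zero>\<^bsub>M\<^esub> \<in> Gamma R a M" using GammaI[of "\<zero>\<^bsub>M\<^esub>" M R a 0] by simp
  next
    fix x assume x: "x \<in> Gamma R a M"
    then obtain n where xc: "x \<in> carrier M" and n: "ideal_pow R a n \<subseteq> annihilator R M x"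
      by (rule GammaE)
    have "ideal_pow R a n \<subseteq> annihilator R M (\<ominus>\<^bsub>M\<^esub> x)"
    proof (rule annI)
      fix r assume r: "r \<in> ideal_pow R a n"
      have rc: "r \<in> carrier R" and rx: "r \<odot>\<^bsub>M\<^esub> x = \<zero>\<^bsub>M\<^esub>" using annD[OF n r] by blast+
      show "r \<in> carrier R \<and> r \<odot>\<^bsub>M\<^esub> (\<ominus>\<^bsub>M\<^esub> x) = \<zero>\<^bsub>M\<^esub>"
        using rc rx xc smult_r_minus[OF rc xc] by simp
    qed
    then show "\<ominus>\<^bsub>M\<^esub> x \<in> Gamma R a M" using xc by (intro GammaI) simp_all
  next
    fix x y assume x: "x \<in> Gamma R a M" and y: "y \<in> Gamma R a M"
    obtain n where xc: "x \<in> carrier M" and n: "ideal_pow R a n \<subseteq> annihilator R M x"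
      using x by (rule GammaE)
    obtain m where yc: "y \<in> carrier M" and m: "ideal_pow R a m \<subseteq> annihilator R M y"
      using y by (rule GammaE)
    have "ideal_pow R a (max n m) \<subseteq> annihilator R M (x \<oplus>\<^bsub>M\<^esub> y)"
    proof (rule annI)
      fix r assume r: "r \<in> ideal_pow R a (max n m)"
      have r1: "r \<in> ideal_pow R a n" using r ideal_pow_anti[OF cr a, of n "max n m"] by auto
      have r2: "r \<in> ideal_pow R a m" using r ideal_pow_anti[OF cr a, of m "max n m"] by auto
      have rc: "r \<in> carrier R" and rx: "r \<odot>\<^bsub>M\<^esub> x = \<zero>\<^bsub>M\<^esub>" using annD[OF n r1] by blast+
      have ry: "r \<odot>\<^bsub>M\<^esub> y = \<zero>\<^bsub>M\<^esub>" using annD[OF m r2] by blast+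
      show "r \<in> carrier R \<and> r \<odot>\<^bsub>M\<^esub> (x \<oplus>\<^bsub>M\<^esub> y) = \<zero>\<^bsub>M\<^esub>"
        using rc smult_r_distr[OF rc xc yc] rx ry by simp
    qed
    then show "x \<oplus>\<^bsub>M\<^esub> y \<in> Gamma R a M" using xc yc by (intro GammaI) simp_all
  next
    fix s x assume s: "s \<in> carrier R" and x: "x \<in> Gamma R a M"
    then obtain n where xc: "x \<in> carrier M" and n: "ideal_pow R a n \<subseteq> annihilator R M x"
      by (elim GammaE)
    have "ideal_pow R a n \<subseteq> annihilator R M (s \<odot>\<^bsub>M\<^esub> x)"
    proof (rule annI)
      fix r assume r: "r \<in> ideal_pow R a n"
      have rc: "r \<in> carrier R" using r ipc by blast
      have "r \<otimes>\<^bsub>R\<^esub> s \<in> ideal_pow R a n"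
        using ideal.I_r_closed[OF ideal_pow_ideal[OF cr a] r s] .
      then have "(r \<otimes>\<^bsub>R\<^esub> s) \<odot>\<^bsub>M\<^esub> x = \<zero>\<^bsub>M\<^esub>" using annD[OF n] by blast
      then show "r \<in> carrier R \<and> r \<odot>\<^bsub>M\<^esub> (s \<odot>\<^bsub>M\<^esub> x) = \<zero>\<^bsub>M\<^esub>"
        using rc smult_assoc1[OF rc s xc] by simp
    qed
    then show "s \<odot>\<^bsub>M\<^esub> x \<in> Gamma R a M" using xc s by (intro GammaI) simp_all
  qed
qed

lemma lin_map_zero:
  assumes "module R M" "module R N" "lin_map R M N f"
  shows "f \<zero>\<^bsub>M\<^esub> = \<zero>\<^bsub>N\<^esub>"
proof -
  interpret M: module R M by fact
  interpret N: module R N by fact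
  have z: "\<zero>\<^bsub>M\<^esub> \<in> carrier M" by simp
  have "f \<zero>\<^bsub>M\<^esub> = f (\<zero>\<^bsub>M\<^esub> \<oplus>\<^bsub>M\<^esub> \<zero>\<^bsub>M\<^esub>)" by simp
  also have "\<dots> = f \<zero>\<^bsub>M\<^esub> \<oplus>\<^bsub>N\<^esub> f \<zero>\<^bsub>M\<^esub>"
    using assms(3) z unfolding lin_map_def by blast
  finally have eq: "f \<zero>\<^bsub>M\<^esub> = f \<zero>\<^bsub>M\<^esub> \<oplus>\<^bsub>N\<^esub> f \<zero>\<^bsub>M\<^esub>" .
  have c: "f \<zero>\<^bsub>M\<^esub> \<in> carrier N" using assms(3) z unfolding lin_map_def by blast
  show ?thesis using N.add.r_cancel_one'[OF c c] eq by simp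
qed

lemma Gamma_functorial:
  assumes "module R M" "module R N" "lin_map R M N f"
  shows "f ` Gamma R a M \<subseteq> Gamma R a N"
proof
  fix y assume "y \<in> f ` Gamma R a M"
  then obtain x n where y: "y = f x" and xc: "x \<in> carrier M" and n: "ideal_pow R a n \<subseteq> annihilator R M x"
    unfolding Gamma_def by auto
  have yc: "y \<in> carrier N" using assms(3) xc y unfolding lin_map_def by auto
  have "ideal_pow R a n \<subseteq> annihilator R N y"
  proof
    fix r assume r: "r \<in> ideal_pow R a n"
    then have rc: "r \<in> carrier R" and rx: "r \<odot>\<^bsub>M\<^esub> x = \<zero>\<^bsub>M\<^esub>" using n unfolding annihilator_def by auto
    have "r \<odot>\<^bsub>N\<^esub> y = f (r \<odot>\<^bsub>M\<^esub> x)" using assms(3) rc xc y unfolding lin_map_def by auto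
    also have "\<dots> = \<zero>\<^bsub>N\<^esub>" using rx lin_map_zero[OF assms] by simp
    finally show "r \<in> annihilator R N y" using rc unfolding annihilator_def by auto
  qed
  then show "y \<in> Gamma R a N" unfolding Gamma_def using yc by auto
qed


lemma sub_abelian:
  assumes "module R M" "submodule N R M"
  shows "abelian_subgroup N M"
  by (rule abelian_subgroupI3[OF additive_subgroup.intro[OF submodule.axioms(1)[OF assms(2)]] module.axioms(2)[OF assms(1)]])

lemma rcosetsE:
  assumes "X \<in> a_rcosets\<^bsub>M\<^esub> N"
  obtains x where "x \<in> carrier M" "X = N +>\<^bsub>M\<^esub> x"
  using assms unfolding A_RCOSETS_def' by blast

lemma rcosetsI:
  assumes "x \<in> carrier M"
  shows "N +>\<^bsub>M\<^esub> x \<in> a_rcosets\<^bsub>M\<^esub> N"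
  using assms unfolding A_RCOSETS_def' by blast

lemma union_const:
  assumes "x \<in> X" "\<And>y. y \<in> X \<Longrightarrow> F y = F x"
  shows "(\<Union>y\<in>X. F y) = F x"
  using assms by blast

lemma quot_smult:
  assumes M: "module R M" and N: "submodule N R M" and x: "x \<in> carrier M" and r: "r \<in> carrier R"
  shows "r \<odot>\<^bsub>quot_module M N\<^esub> (N +>\<^bsub>M\<^esub> x) = N +>\<^bsub>M\<^esub> (r \<odot>\<^bsub>M\<^esub> x)"
proof -
  interpret module R M by fact
  interpret abelian_subgroup N M by (rule sub_abelian[OF M N])
  have "(\<Union>y\<in>N +>\<^bsub>M\<^esub> x. N +>\<^bsub>M\<^esub> (r \<odot>\<^bsub>M\<^esub> y)) = N +>\<^bsub>M\<^esub> (r \<odot>\<^bsub>M\<^esub> x)"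
  proof (rule union_const)
    show "x \<in> N +>\<^bsub>M\<^esub> x" using a_rcos_self[OF x] .
    fix y assume y: "y \<in> N +>\<^bsub>M\<^esub> x"
    have yc: "y \<in> carrier M" using a_elemrcos_carrier[OF x y] .
    have d: "y \<oplus>\<^bsub>M\<^esub> \<ominus>\<^bsub>M\<^esub> x \<in> N" using a_rcos_module_imp[OF x y] .
    have "r \<odot>\<^bsub>M\<^esub> (y \<oplus>\<^bsub>M\<^esub> \<ominus>\<^bsub>M\<^esub> x) \<in> N" using submodule.smult_closed[OF N r d] .
    moreover have "r \<odot>\<^bsub>M\<^esub> (y \<oplus>\<^bsub>M\<^esub> \<ominus>\<^bsub>M\<^esub> x) = r \<odot>\<^bsub>M\<^esub> y \<oplus>\<^bsub>M\<^esub> \<ominus>\<^bsub>M\<^esub> (r \<odot>\<^bsub>M\<^esub> x)"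
      using smult_r_distr[OF r yc] smult_r_minus[OF r x] x by simp
    ultimately have "r \<odot>\<^bsub>M\<^esub> y \<in> N +>\<^bsub>M\<^esub> (r \<odot>\<^bsub>M\<^esub> x)"
      using a_rcos_module_rev[of "r \<odot>\<^bsub>M\<^esub> x" "r \<odot>\<^bsub>M\<^esub> y"] r x yc by simp
    then show "N +>\<^bsub>M\<^esub> (r \<odot>\<^bsub>M\<^esub> y) = N +>\<^bsub>M\<^esub> (r \<odot>\<^bsub>M\<^esub> x)"
      using a_repr_independence'[of "r \<odot>\<^bsub>M\<^esub> y" "r \<odot>\<^bsub>M\<^esub> x"] r x by simp
  qed
  then show ?thesis unfolding quot_module_def by simp
qed

lemma quot_module:
  assumes M: "module R M" and N: "submodule N R M"
  shows "module R (quot_module M N)"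
proof -
  interpret module R M by fact
  interpret abelian_subgroup N M by (rule sub_abelian[OF M N])
  have car: "carrier (quot_module M N) = a_rcosets\<^bsub>M\<^esub> N" by (simp add: quot_module_def)
  have add: "X \<oplus>\<^bsub>quot_module M N\<^esub> Y = X <+>\<^bsub>M\<^esub> Y" for X Y by (simp add: quot_module_def)
  have zero: "\<zero>\<^bsub>quot_module M N\<^esub> = N" by (simp add: quot_module_def)
  have ab: "abelian_group (quot_module M N)"
  proof (rule abelian_groupI, unfold car add zero)
    show "\<And>x y. x \<in> a_rcosets\<^bsub>M\<^esub> N \<Longrightarrow> y \<in> a_rcosets\<^bsub>M\<^esub> N \<Longrightarrow> x <+>\<^bsub>M\<^esub> y \<in> a_rcosets\<^bsub>M\<^esub> N"
      by (rule a_setmult_closed)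
    show "N \<in> a_rcosets\<^bsub>M\<^esub> N" by (rule a_subgroup_in_rcosets)
    show "\<And>x y z. x \<in> a_rcosets\<^bsub>M\<^esub> N \<Longrightarrow> y \<in> a_rcosets\<^bsub>M\<^esub> N \<Longrightarrow> z \<in> a_rcosets\<^bsub>M\<^esub> N \<Longrightarrow> x <+>\<^bsub>M\<^esub> y <+>\<^bsub>M\<^esub> z = x <+>\<^bsub>M\<^esub> (y <+>\<^bsub>M\<^esub> z)"
      by (rule a_rcosets_assoc)
    show "x <+>\<^bsub>M\<^esub> y = y <+>\<^bsub>M\<^esub> x" if xX: "x \<in> a_rcosets\<^bsub>M\<^esub> N" and yY: "y \<in> a_rcosets\<^bsub>M\<^esub> N" for x y
    proof -
      obtain u where u: "u \<in> carrier M" "x = N +>\<^bsub>M\<^esub> u" using xX by (rule rcosetsE)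
      obtain v where v: "v \<in> carrier M" "y = N +>\<^bsub>M\<^esub> v" using yY by (rule rcosetsE)
      show ?thesis using u v a_rcos_sum[OF u(1) v(1)] a_rcos_sum[OF v(1) u(1)] a_comm[OF u(1) v(1)] by simp
    qed
    show "\<And>x. x \<in> a_rcosets\<^bsub>M\<^esub> N \<Longrightarrow> N <+>\<^bsub>M\<^esub> x = x" by (rule rcosets_add_eq)
    show "\<exists>y\<in>a_rcosets\<^bsub>M\<^esub> N. y <+>\<^bsub>M\<^esub> x = N" if "x \<in> a_rcosets\<^bsub>M\<^esub> N" for x
      using a_setinv_closed[OF that] a_rcosets_inv_mult_group_eq[OF that] by blast
  qed
  show ?thesis
  proof (rule moduleI)
    show "cring R" by (rule is_cring)
    show "abelian_group (quot_module M N)" by (rule ab)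
  next
    fix r X assume r: "r \<in> carrier R" and X: "X \<in> carrier (quot_module M N)"
    obtain x where x: "x \<in> carrier M" "X = N +>\<^bsub>M\<^esub> x" using X unfolding car by (rule rcosetsE)
    show "r \<odot>\<^bsub>quot_module M N\<^esub> X \<in> carrier (quot_module M N)"
      using quot_smult[OF M N x(1) r] x r unfolding car by (simp add: rcosetsI)
  next
    fix r s X assume r: "r \<in> carrier R" and s: "s \<in> carrier R" and X: "X \<in> carrier (quot_module M N)"
    obtain x where x: "x \<in> carrier M" "X = N +>\<^bsub>M\<^esub> x" using X unfolding car by (rule rcosetsE)
    show "(r \<oplus>\<^bsub>R\<^esub> s) \<odot>\<^bsub>quot_module M N\<^esub> X = r \<odot>\<^bsub>quot_module M N\<^esub> X \<oplus>\<^bsub>quot_module M N\<^esub> s \<odot>\<^bsub>quot_module M N\<^esub> X"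
      unfolding add x(2) using quot_smult[OF M N x(1)] r s x(1) a_rcos_sum smult_l_distr by simp
    show "(r \<otimes>\<^bsub>R\<^esub> s) \<odot>\<^bsub>quot_module M N\<^esub> X = r \<odot>\<^bsub>quot_module M N\<^esub> (s \<odot>\<^bsub>quot_module M N\<^esub> X)"
      unfolding x(2) using quot_smult[OF M N] r s x(1) smult_assoc1 by simp
  next
    fix r X Y assume r: "r \<in> carrier R" and X: "X \<in> carrier (quot_module M N)" and Y: "Y \<in> carrier (quot_module M N)"
    obtain x where x: "x \<in> carrier M" "X = N +>\<^bsub>M\<^esub> x" using X unfolding car by (rule rcosetsE)
    obtain y where y: "y \<in> carrier M" "Y = N +>\<^bsub>M\<^esub> y" using Y unfolding car by (rule rcosetsE)
    show "r \<odot>\<^bsub>quot_module M N\<^esub> (X \<oplus>\<^bsub>quot_module M N\<^esub> Y) = r \<odot>\<^bsub>quot_module M N\<^esub> X \<oplus>\<^bsub>quot_module M N\<^esub> r \<odot>\<^bsub>quot_module M N\<^esub> Y"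
      unfolding add x(2) y(2) using quot_smult[OF M N] r x(1) y(1) a_rcos_sum smult_r_distr by simp
  next
    fix X assume X: "X \<in> carrier (quot_module M N)"
    obtain x where x: "x \<in> carrier M" "X = N +>\<^bsub>M\<^esub> x" using X unfolding car by (rule rcosetsE)
    show "\<one>\<^bsub>R\<^esub> \<odot>\<^bsub>quot_module M N\<^esub> X = X"
      unfolding x(2) using quot_smult[OF M N x(1)] x(1) by simp
  qed
qed


definition dD :: "('r, 'm) module \<Rightarrow> 'm set \<Rightarrow> nat \<Rightarrow> ('r, 'm) module" where
  "dD M N = (\<lambda>v. if v = 0 then M\<lparr>carrier := N\<rparr> else M)"
definition dF :: "('r, 'm) module \<Rightarrow> nat \<Rightarrow> 'm \<Rightarrow> 'm" where
  "dF M = (\<lambda>e. if e = 0 then (\<lambda>x. x) else (\<lambda>_. \<zero>\<^bsub>M\<^esub>))"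
definition dI :: "('r, 'm) module \<Rightarrow> 'm set \<Rightarrow> nat \<Rightarrow> 'm \<Rightarrow> 'm set" where
  "dI M N = (\<lambda>v. if v = 0 then (\<lambda>_. N) else (\<lambda>x. N +>\<^bsub>M\<^esub> x))"

lemma lin_map_const_zero:
  assumes "module R N"
  shows "lin_map R M N (\<lambda>_. \<zero>\<^bsub>N\<^esub>)"
proof -
  interpret module R N by fact
  show ?thesis unfolding lin_map_def by simp
qed

lemma lin_map_id_sub:
  assumes "module R M" "submodule N R M"
  shows "lin_map R (M\<lparr>carrier := N\<rparr>) M (\<lambda>x. x)"
  using submodule.axioms(1)[OF assms(2)] unfolding lin_map_def subgroup_def by auto

lemma coeq_colimit:
  assumes M: "module R M" and N: "submodule N R M"
  shows "is_colimit R {0,1} {0,1} (\<lambda>_. 0) (\<lambda>_. 1) (dD M N) (dF M) (quot_module M N) (dI M N)"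
proof -
  interpret module R M by fact
  interpret abelian_subgroup N M by (rule sub_abelian[OF M N])
  have Nc: "N \<subseteq> carrier M" by (rule a_subset)
  have Q: "module R (quot_module M N)" by (rule quot_module[OF M N])
  have car: "carrier (quot_module M N) = a_rcosets\<^bsub>M\<^esub> N" by (simp add: quot_module_def)
  have add: "X \<oplus>\<^bsub>quot_module M N\<^esub> Y = X <+>\<^bsub>M\<^esub> Y" for X Y by (simp add: quot_module_def)
  have zero: "\<zero>\<^bsub>quot_module M N\<^esub> = N" by (simp add: quot_module_def)
  have N0: "N +>\<^bsub>M\<^esub> \<zero>\<^bsub>M\<^esub> = N" using Nc by simp
  have D0: "module R (M\<lparr>carrier := N\<rparr>)" by (rule submodule.submodule_is_module[OF N M])
  have dia: "diagram R {0,1} {0,1} (\<lambda>_. 0) (\<lambda>_. 1) (dD M N) (dF M)"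
    unfolding diagram_def dD_def dF_def
    using D0 M lin_map_id_sub[OF M N] lin_map_const_zero[OF M] by simp
  have lin0: "lin_map R (M\<lparr>carrier := N\<rparr>) (quot_module M N) (\<lambda>_. N)"
    using lin_map_const_zero[OF Q, of "M\<lparr>carrier := N\<rparr>"] by (simp add: zero)
  have lin1: "lin_map R M (quot_module M N) (\<lambda>x. N +>\<^bsub>M\<^esub> x)"
    unfolding lin_map_def car add using quot_smult[OF M N] a_rcos_sum by (simp add: rcosetsI)
  have coc: "cocone R {0,1} {0,1} (\<lambda>_. 0) (\<lambda>_. 1) (dD M N) (dF M) (quot_module M N) (dI M N)"
    unfolding cocone_def dD_def dF_def dI_def
    using Q lin0 lin1 a_rcos_const N0 by simp
  have univ: "\<exists>u. lin_map R (quot_module M N) L u \<and> (\<forall>v\<in>{0,1}. \<forall>x\<in>carrier (dD M N v). u (dI M N v x) = \<kappa> v x) \<and>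
             (\<forall>u'. lin_map R (quot_module M N) L u' \<and> (\<forall>v\<in>{0,1}. \<forall>x\<in>carrier (dD M N v). u' (dI M N v x) = \<kappa> v x)
                   \<longrightarrow> (\<forall>y\<in>carrier (quot_module M N). u' y = u y))"
    if cL: "cocone R {0,1} {0,1} (\<lambda>_. 0) (\<lambda>_. 1) (dD M N) (dF M) L \<kappa>" for L and \<kappa>
  proof -
    have L: "module R L" using cL unfolding cocone_def by blast
    interpret L: module R L by fact
    define k where "k = \<kappa> 1"
    have k: "lin_map R M L k" using cL unfolding cocone_def dD_def k_def by simp
    have e0: "k x = \<kappa> 0 x" if "x \<in> N" for x
      using cL that unfolding cocone_def dD_def dF_def k_def by simp
    have e1: "k \<zero>\<^bsub>M\<^esub> = \<kappa> 0 x" if "x \<in> N" for x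
      using cL that unfolding cocone_def dD_def dF_def k_def by auto
    have k0: "k \<zero>\<^bsub>M\<^esub> = \<zero>\<^bsub>L\<^esub>" by (rule lin_map_zero[OF M L k])
    have kN: "k x = \<zero>\<^bsub>L\<^esub>" if "x \<in> N" for x using e0[OF that] e1[OF that] k0 by simp
    have kc: "k x \<in> carrier L" if "x \<in> carrier M" for x using k that unfolding lin_map_def by blast
    have kadd: "k (x \<oplus>\<^bsub>M\<^esub> y) = k x \<oplus>\<^bsub>L\<^esub> k y" if "x \<in> carrier M" "y \<in> carrier M" for x y
      using k that unfolding lin_map_def by blast
    have ksm: "k (r \<odot>\<^bsub>M\<^esub> x) = r \<odot>\<^bsub>L\<^esub> k x" if "r \<in> carrier R" "x \<in> carrier M" for r x
      using k that unfolding lin_map_def by blast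
    have key: "k y = k x" if x: "x \<in> carrier M" and y: "y \<in> carrier M" and eq: "N +>\<^bsub>M\<^esub> x = N +>\<^bsub>M\<^esub> y" for x y
    proof -
      have "y \<in> N +>\<^bsub>M\<^esub> x" using eq a_rcos_self[OF y] by simp
      then have d: "y \<oplus>\<^bsub>M\<^esub> \<ominus>\<^bsub>M\<^esub> x \<in> N" using a_rcos_module_imp[OF x] by blast
      have "y = (y \<oplus>\<^bsub>M\<^esub> \<ominus>\<^bsub>M\<^esub> x) \<oplus>\<^bsub>M\<^esub> x" using x y by (simp add: a_assoc l_neg)
      then have "k y = k (y \<oplus>\<^bsub>M\<^esub> \<ominus>\<^bsub>M\<^esub> x) \<oplus>\<^bsub>L\<^esub> k x"
        using kadd[of "y \<oplus>\<^bsub>M\<^esub> \<ominus>\<^bsub>M\<^esub> x" x] x y by simp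
      then show ?thesis using kN[OF d] kc[OF x] by simp
    qed
    define u where "u X = k (SOME x. x \<in> carrier M \<and> X = N +>\<^bsub>M\<^esub> x)" for X
    have uX: "u (N +>\<^bsub>M\<^esub> x) = k x" if x: "x \<in> carrier M" for x
    proof -
      have "\<exists>z. z \<in> carrier M \<and> N +>\<^bsub>M\<^esub> x = N +>\<^bsub>M\<^esub> z" using x by blast
      then have "(SOME z. z \<in> carrier M \<and> N +>\<^bsub>M\<^esub> x = N +>\<^bsub>M\<^esub> z) \<in> carrier M \<and>
                 N +>\<^bsub>M\<^esub> x = N +>\<^bsub>M\<^esub> (SOME z. z \<in> carrier M \<and> N +>\<^bsub>M\<^esub> x = N +>\<^bsub>M\<^esub> z)"
        by (rule someI_ex)
      then show ?thesis unfolding u_def using key x by blast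
    qed
    have ulin: "lin_map R (quot_module M N) L u"
      unfolding lin_map_def car add
    proof (intro conjI ballI)
      fix X assume "X \<in> a_rcosets\<^bsub>M\<^esub> N"
      then obtain x where x: "x \<in> carrier M" "X = N +>\<^bsub>M\<^esub> x" by (rule rcosetsE)
      show "u X \<in> carrier L" using x uX kc by simp
    next
      fix X Y assume "X \<in> a_rcosets\<^bsub>M\<^esub> N" "Y \<in> a_rcosets\<^bsub>M\<^esub> N"
      then obtain x y where x: "x \<in> carrier M" "X = N +>\<^bsub>M\<^esub> x" and y: "y \<in> carrier M" "Y = N +>\<^bsub>M\<^esub> y"
        by (meson rcosetsE)
      show "u (X <+>\<^bsub>M\<^esub> Y) = u X \<oplus>\<^bsub>L\<^esub> u Y"
        using x y a_rcos_sum[OF x(1) y(1)] uX kadd by simp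
    next
      fix r X assume r: "r \<in> carrier R" and "X \<in> a_rcosets\<^bsub>M\<^esub> N"
      then obtain x where x: "x \<in> carrier M" "X = N +>\<^bsub>M\<^esub> x" by (meson rcosetsE)
      show "u (r \<odot>\<^bsub>quot_module M N\<^esub> X) = r \<odot>\<^bsub>L\<^esub> u X"
        using x r quot_smult[OF M N x(1) r] uX ksm by simp
    qed
    have ufac: "\<forall>v\<in>{0,1}. \<forall>x\<in>carrier (dD M N v). u (dI M N v x) = \<kappa> v x"
    proof -
      have "u N = \<zero>\<^bsub>L\<^esub>" using uX[of "\<zero>\<^bsub>M\<^esub>"] N0 k0 by simp
      then show ?thesis unfolding dD_def dI_def using uX e0 kN by (simp add: k_def)
    qed
    have uuniq: "\<forall>y\<in>carrier (quot_module M N). u' y = u y"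
      if u': "\<forall>v\<in>{0,1}. \<forall>x\<in>carrier (dD M N v). u' (dI M N v x) = \<kappa> v x" for u'
    proof
      fix Y assume "Y \<in> carrier (quot_module M N)"
      then obtain y where y: "y \<in> carrier M" "Y = N +>\<^bsub>M\<^esub> y" unfolding car by (rule rcosetsE)
      have "u' (N +>\<^bsub>M\<^esub> y) = k y" using u' y unfolding dD_def dI_def k_def by simp
      then show "u' Y = u Y" using y uX by simp
    qed
    show ?thesis using ulin ufac uuniq by blast
  qed
  show ?thesis unfolding is_colimit_def using dia coc univ by blast
qed


lemma rm_simps:
  "carrier (ring_module R) = carrier R"
  "add (ring_module R) = add R"
  "zero (ring_module R) = zero R"
  "smult (ring_module R) = monoid.mult R"
  by (simp_all add: ring_module_def)

lemma rm_set_add: "set_add (ring_module R) A B = set_add R A B"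
  by (simp add: set_add_def' rm_simps)

lemma rm_a_inv: "a_inv (ring_module R) x = a_inv R x"
  by (simp add: a_inv_def m_inv_def rm_simps)

lemma ring_module_module:
  assumes "cring R"
  shows "module R (ring_module R)"
proof -
  interpret cring R by fact
  show ?thesis
  proof (rule moduleI)
    show "cring R" by fact
    show "abelian_group (ring_module R)"
      by (rule abelian_groupI) (auto simp: rm_simps a_ac intro: l_neg)
  qed (auto simp: rm_simps l_distr r_distr m_assoc)
qed

lemma ideal_submodule:
  assumes "cring R" "ideal a R"
  shows "submodule a R (ring_module R)"
proof -
  interpret cring R by fact
  interpret ideal a R by fact
  interpret module R "ring_module R" by (rule ring_module_module) fact
  show ?thesis
    by (rule submoduleI) (auto simp: rm_simps rm_a_inv a_subset I_l_closed)
qed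


lemma radical_part:
  fixes R :: "('r, 'z) ring_scheme" and M :: "('r, 'm) module"
  assumes cr: "cring R" and a: "ideal a R"
    and hyp: "Gamma_commutes_colimits R a TYPE('m) TYPE('m set)"
    and M: "module R M"
  shows "Gamma R a (quot_module M (Gamma R a M)) = {\<zero>\<^bsub>quot_module M (Gamma R a M)\<^esub>}"
proof -
  define G where "G = Gamma R a M"
  define Q where "Q = quot_module M G"
  define GQ where "GQ = Gamma_mod R a Q"
  have sub: "submodule G R M" unfolding G_def by (rule Gamma_submodule[OF M a])
  interpret module R M by fact
  interpret abelian_subgroup G M by (rule sub_abelian[OF M sub])
  have col: "is_colimit R {0,1} {0,1} (\<lambda>_. 0) (\<lambda>_. 1) (dD M G) (dF M) Q (dI M G)"
    unfolding Q_def by (rule coeq_colimit[OF M sub])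
  have col2: "is_colimit R {0,1} {0,1} (\<lambda>_. 0) (\<lambda>_. 1) (\<lambda>v. Gamma_mod R a (dD M G v)) (dF M) GQ (dI M G)"
    using hyp col unfolding Gamma_commutes_colimits_def GQ_def by blast
  have coc: "cocone R {0,1} {0,1} (\<lambda>_. 0) (\<lambda>_. 1) (\<lambda>v. Gamma_mod R a (dD M G v)) (dF M) GQ (dI M G)"
    using col2 unfolding is_colimit_def by blast
  have GQm: "module R GQ" using coc unfolding cocone_def by blast
  interpret GQ: module R GQ by fact
  obtain u where uu: "\<And>u'. lin_map R GQ GQ u' \<and> (\<forall>v\<in>{0,1}. \<forall>x\<in>carrier (Gamma_mod R a (dD M G v)). u' (dI M G v x) = dI M G v x)
                   \<Longrightarrow> (\<forall>y\<in>carrier GQ. u' y = u y)"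
    using col2 coc unfolding is_colimit_def by blast
  have lid: "lin_map R GQ GQ (\<lambda>x. x)" unfolding lin_map_def by simp
  have id: "\<forall>y\<in>carrier GQ. y = u y" using uu[of "\<lambda>x. x"] lid by simp
  have z: "\<zero>\<^bsub>GQ\<^esub> = G" by (simp add: GQ_def Q_def Gamma_mod_def quot_module_def)
  have fz: "\<forall>v\<in>{0,1}. \<forall>x\<in>carrier (Gamma_mod R a (dD M G v)). \<zero>\<^bsub>GQ\<^esub> = dI M G v x"
  proof -
    have "G +>\<^bsub>M\<^esub> x = G" if "x \<in> Gamma R a M" for x using a_rcos_const that G_def by simp
    then show ?thesis unfolding z dD_def dI_def by (simp add: Gamma_mod_def G_def)
  qed
  have zz: "\<forall>y\<in>carrier GQ. \<zero>\<^bsub>GQ\<^esub> = u y"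
    by (rule uu) (use lin_map_const_zero[OF GQm, of GQ] fz in blast)
  have "carrier GQ = {\<zero>\<^bsub>GQ\<^esub>}" using id zz GQ.zero_closed by blast
  moreover have "carrier GQ = Gamma R a Q" by (simp add: GQ_def Gamma_mod_def)
  moreover have "\<zero>\<^bsub>GQ\<^esub> = \<zero>\<^bsub>Q\<^esub>" by (simp add: GQ_def Gamma_mod_def)
  ultimately show ?thesis unfolding Q_def G_def by simp
qed


lemma sum_part:
  fixes R :: "('r, 'z) ring_scheme"
  assumes cr: "cring R" and a: "ideal a R"
    and hyp: "Gamma_commutes_colimits R a TYPE('r) TYPE('r set)"
  shows "carrier R = Gamma R a (ring_module R) <+>\<^bsub>R\<^esub> a"
proof -
  define RM where "RM = ring_module R"
  define \<Gamma> where "\<Gamma> = Gamma R a RM"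
  define S where "S = \<Gamma> <+>\<^bsub>RM\<^esub> a"
  have RMm: "module R RM" unfolding RM_def by (rule ring_module_module[OF cr])
  interpret cring R by fact
  interpret ideal a R by fact
  interpret RM: module R RM by fact
  have subG: "submodule \<Gamma> R RM" unfolding \<Gamma>_def by (rule Gamma_submodule[OF RMm a])
  have suba: "submodule a R RM" unfolding RM_def by (rule ideal_submodule[OF cr a])
  interpret A: abelian_subgroup a RM by (rule sub_abelian[OF RMm suba])
  have Gc: "\<Gamma> \<subseteq> carrier RM" using subG unfolding submodule_def subgroup_def by simp
  have ac: "a \<subseteq> carrier RM" using suba unfolding submodule_def subgroup_def by simp
  have G0: "\<zero>\<^bsub>RM\<^esub> \<in> \<Gamma>" using subgroup.one_closed[OF submodule.axioms(1)[OF subG]] by simp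
  have a0: "\<zero>\<^bsub>RM\<^esub> \<in> a" by (simp add: RM_def rm_simps)
  have S_mem: "g \<oplus>\<^bsub>RM\<^esub> i \<in> S" if "g \<in> \<Gamma>" "i \<in> a" for g i
    using that unfolding S_def set_add_def' by blast
  have S_memE: "\<exists>g\<in>\<Gamma>. \<exists>i\<in>a. s = g \<oplus>\<^bsub>RM\<^esub> i" if "s \<in> S" for s
    using that unfolding S_def set_add_def' by blast
  have aS: "a \<subseteq> S"
  proof
    fix i assume i: "i \<in> a"
    then have "i = \<zero>\<^bsub>RM\<^esub> \<oplus>\<^bsub>RM\<^esub> i" using ac by auto
    then show "i \<in> S" using S_mem[OF G0 i] by simp
  qed
  have GS: "\<Gamma> \<subseteq> S"
  proof
    fix g assume g: "g \<in> \<Gamma>"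
    then have "g = g \<oplus>\<^bsub>RM\<^esub> \<zero>\<^bsub>RM\<^esub>" using Gc by auto
    then show "g \<in> S" using S_mem[OF g a0] by simp
  qed
  have subS: "submodule S R RM"
  proof (rule submodule.intro)
    have "additive_subgroup S RM" unfolding S_def
      by (rule RM.add_additive_subgroups)
         (simp_all add: additive_subgroup.intro submodule.axioms(1)[OF subG] submodule.axioms(1)[OF suba])
    then show "subgroup S (add_monoid RM)" by (rule additive_subgroup.a_subgroup)
    show "submodule_axioms S R RM"
    proof
      fix r s assume r: "r \<in> carrier R" and s: "s \<in> S"
      then obtain g i where g: "g \<in> \<Gamma>" and i: "i \<in> a" and si: "s = g \<oplus>\<^bsub>RM\<^esub> i" using S_memE by blast
      have "r \<odot>\<^bsub>RM\<^esub> s = r \<odot>\<^bsub>RM\<^esub> g \<oplus>\<^bsub>RM\<^esub> r \<odot>\<^bsub>RM\<^esub> i"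
        using si RM.smult_r_distr[OF r] g i Gc ac by auto
      moreover have "r \<odot>\<^bsub>RM\<^esub> g \<in> \<Gamma>" using submodule.smult_closed[OF subG r g] .
      moreover have "r \<odot>\<^bsub>RM\<^esub> i \<in> a" using submodule.smult_closed[OF suba r i] .
      ultimately show "r \<odot>\<^bsub>RM\<^esub> s \<in> S" using S_mem by simp
    qed
  qed
  interpret S: abelian_subgroup S RM by (rule sub_abelian[OF RMm subS])
  define T where "T = quot_module RM S"
  have Tm: "module R T" unfolding T_def by (rule quot_module[OF RMm subS])
  have zT: "\<zero>\<^bsub>T\<^esub> = S" by (simp add: T_def quot_module_def)
  define Q where "Q = quot_module RM a"
  define GQ where "GQ = Gamma_mod R a Q"
  have col: "is_colimit R {0,1} {0,1} (\<lambda>_. 0) (\<lambda>_. 1) (dD RM a) (dF RM) Q (dI RM a)"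
    unfolding Q_def by (rule coeq_colimit[OF RMm suba])
  have col2: "is_colimit R {0,1} {0,1} (\<lambda>_. 0) (\<lambda>_. 1) (\<lambda>v. Gamma_mod R a (dD RM a v)) (dF RM) GQ (dI RM a)"
    using hyp col unfolding Gamma_commutes_colimits_def GQ_def RM_def by blast
  have cocT: "cocone R {0,1} {0,1} (\<lambda>_. 0) (\<lambda>_. 1) (\<lambda>v. Gamma_mod R a (dD RM a v)) (dF RM) T (\<lambda>v x. \<zero>\<^bsub>T\<^esub>)"
    unfolding cocone_def using Tm lin_map_const_zero[OF Tm, of "Gamma_mod R a (dD RM a 0)"]
      lin_map_const_zero[OF Tm, of "Gamma_mod R a (dD RM a 1)"] by simp
  obtain u where uu: "\<And>u'. lin_map R GQ T u' \<and> (\<forall>v\<in>{0,1}. \<forall>x\<in>carrier (Gamma_mod R a (dD RM a v)). u' (dI RM a v x) = \<zero>\<^bsub>T\<^esub>)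
                   \<Longrightarrow> (\<forall>y\<in>carrier GQ. u' y = u y)"
    using col2 cocT unfolding is_colimit_def by blast
  have carGQ: "carrier GQ = Gamma R a Q" by (simp add: GQ_def Gamma_mod_def)
  have carQ: "carrier Q = a_rcosets\<^bsub>RM\<^esub> a" by (simp add: Q_def quot_module_def)
  have GQsub: "X \<in> a_rcosets\<^bsub>RM\<^esub> a" if "X \<in> carrier GQ" for X
    using that unfolding carGQ Gamma_def carQ by blast
  define u1 where "u1 X = (\<Union>x\<in>X. S +>\<^bsub>RM\<^esub> x)" for X
  have u1X: "u1 (a +>\<^bsub>RM\<^esub> x) = S +>\<^bsub>RM\<^esub> x" if x: "x \<in> carrier RM" for x
    unfolding u1_def
  proof (rule union_const)
    show "x \<in> a +>\<^bsub>RM\<^esub> x" using A.a_rcos_self[OF x] .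
    fix y assume y: "y \<in> a +>\<^bsub>RM\<^esub> x"
    have yc: "y \<in> carrier RM" using A.a_elemrcos_carrier[OF x y] .
    have "y \<oplus>\<^bsub>RM\<^esub> \<ominus>\<^bsub>RM\<^esub> x \<in> a" using A.a_rcos_module_imp[OF x y] .
    then have "y \<in> S +>\<^bsub>RM\<^esub> x" using S.a_rcos_module_rev[OF x yc] aS by blast
    then show "S +>\<^bsub>RM\<^esub> y = S +>\<^bsub>RM\<^esub> x" using S.a_repr_independence'[OF _ x] by simp
  qed
  have u1lin: "lin_map R GQ T u1"
    unfolding lin_map_def
  proof (intro conjI ballI)
    fix X assume "X \<in> carrier GQ"
    then obtain x where x: "x \<in> carrier RM" "X = a +>\<^bsub>RM\<^esub> x" using GQsub by (meson rcosetsE)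
    show "u1 X \<in> carrier T" using x u1X rcosetsI[OF x(1)] by (simp add: T_def quot_module_def)
  next
    fix X Y assume "X \<in> carrier GQ" "Y \<in> carrier GQ"
    then obtain x y where x: "x \<in> carrier RM" "X = a +>\<^bsub>RM\<^esub> x" and y: "y \<in> carrier RM" "Y = a +>\<^bsub>RM\<^esub> y"
      using GQsub by (meson rcosetsE)
    have "X \<oplus>\<^bsub>GQ\<^esub> Y = a +>\<^bsub>RM\<^esub> (x \<oplus>\<^bsub>RM\<^esub> y)"
      using A.a_rcos_sum[OF x(1) y(1)] x y by (simp add: GQ_def Gamma_mod_def Q_def quot_module_def)
    then show "u1 (X \<oplus>\<^bsub>GQ\<^esub> Y) = u1 X \<oplus>\<^bsub>T\<^esub> u1 Y"
      using x y u1X S.a_rcos_sum[OF x(1) y(1)] by (simp add: T_def quot_module_def)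
  next
    fix r X assume r: "r \<in> carrier R" and "X \<in> carrier GQ"
    then obtain x where x: "x \<in> carrier RM" "X = a +>\<^bsub>RM\<^esub> x" using GQsub by (meson rcosetsE)
    have "r \<odot>\<^bsub>GQ\<^esub> X = a +>\<^bsub>RM\<^esub> (r \<odot>\<^bsub>RM\<^esub> x)"
      using quot_smult[OF RMm suba x(1) r] x by (simp add: GQ_def Gamma_mod_def Q_def)
    then show "u1 (r \<odot>\<^bsub>GQ\<^esub> X) = r \<odot>\<^bsub>T\<^esub> u1 X"
      using x r u1X quot_smult[OF RMm subS x(1) r] by (simp add: T_def)
  qed
  have u1fac: "\<forall>v\<in>{0,1}. \<forall>x\<in>carrier (Gamma_mod R a (dD RM a v)). u1 (dI RM a v x) = \<zero>\<^bsub>T\<^esub>"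
  proof -
    have "u1 a = S" using u1X[of "\<zero>\<^bsub>RM\<^esub>"] ac S.a_subset by simp
    moreover have "u1 (a +>\<^bsub>RM\<^esub> x) = S" if "x \<in> \<Gamma>" for x
      using u1X[of x] that Gc GS S.a_rcos_const by auto
    ultimately show ?thesis unfolding zT dD_def dI_def by (simp add: Gamma_mod_def \<Gamma>_def)
  qed
  have e1: "\<forall>y\<in>carrier GQ. u1 y = u y" by (rule uu) (use u1lin u1fac in blast)
  have e2: "\<forall>y\<in>carrier GQ. \<zero>\<^bsub>T\<^esub> = u y" by (rule uu) (use lin_map_const_zero[OF Tm, of GQ] in simp)
  have all: "x \<in> S" if x: "x \<in> carrier R" for x
  proof -
    have xc: "x \<in> carrier RM" using x by (simp add: RM_def rm_simps)
    have "ideal_pow R a 1 \<subseteq> annihilator R Q (a +>\<^bsub>RM\<^esub> x)"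
    proof
      fix r assume "r \<in> ideal_pow R a 1"
      then have ra: "r \<in> a" using ideal_pow_one[OF cr a] by blast
      then have rc: "r \<in> carrier R" using a_subset by blast
      have "r \<odot>\<^bsub>RM\<^esub> x \<in> a" using I_r_closed[OF ra x] by (simp add: RM_def rm_simps)
      then have "r \<odot>\<^bsub>Q\<^esub> (a +>\<^bsub>RM\<^esub> x) = \<zero>\<^bsub>Q\<^esub>"
        using quot_smult[OF RMm suba xc rc] A.a_rcos_const by (simp add: Q_def quot_module_def)
      then show "r \<in> annihilator R Q (a +>\<^bsub>RM\<^esub> x)" using rc unfolding annihilator_def by blast
    qed
    moreover have "a +>\<^bsub>RM\<^esub> x \<in> carrier Q" using rcosetsI[OF xc] carQ by simp
    ultimately have "a +>\<^bsub>RM\<^esub> x \<in> carrier GQ" unfolding carGQ by (blast intro: GammaI)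
    then have "S +>\<^bsub>RM\<^esub> x = S" using e1 e2 u1X[OF xc] zT by metis
    then show "x \<in> S" using S.a_rcos_self[OF xc] by simp
  qed
  have "S \<subseteq> carrier R" using S.a_subset by (simp add: RM_def rm_simps)
  then have "carrier R = S" using all by blast
  then show ?thesis unfolding S_def \<Gamma>_def RM_def rm_set_add .
qed

theorem proposition9p7:
  fixes R :: "'r ring" and a :: "'r set"
  assumes "cring R" and "ideal a R"
    and "Gamma_commutes_colimits R a TYPE('m) TYPE('m set)"
    and "Gamma_commutes_colimits R a TYPE('r) TYPE('r set)"
  shows "(\<forall>M :: ('r, 'm) module. module R M \<longrightarrow>
            submodule (Gamma R a M) R M \<and>
            (\<forall>(N :: ('r, 'n) module) f. module R N \<and> lin_map R M N f \<longrightarrow>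
                 f ` Gamma R a M \<subseteq> Gamma R a N) \<and>
            Gamma R a (quot_module M (Gamma R a M)) = {\<zero>\<^bsub>quot_module M (Gamma R a M)\<^esub>})
         \<and> carrier R = Gamma R a (ring_module R) <+>\<^bsub>R\<^esub> a"
proof (intro conjI allI impI)
  fix M :: "('r, 'm) module" assume M: "module R M"
  show "submodule (Gamma R a M) R M" by (rule Gamma_submodule[OF M assms(2)])
  show "f ` Gamma R a M \<subseteq> Gamma R a N"
    if Nf: "module R N \<and> lin_map R M N f" for N :: "('r, 'n) module" and f
    using Gamma_functorial[OF M] Nf by blast
  show "Gamma R a (quot_module M (Gamma R a M)) = {\<zero>\<^bsub>quot_module M (Gamma R a M)\<^esub>}"
    by (rule radical_part[OF assms(1,2,3) M])
next
  show "carrier R = Gamma R a (ring_module R) <+>\<^bsub>R\<^esub> a"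
    by (rule sum_part[OF assms(1,2,4)])
qed

end
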